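(* Let $\beta\in(0,1)$, $z>0$, $c>0$, $\delta\in(0,1)$, and let $N$ and $\Delta$ be positive integers. Let $F$ be a continuous cumulative distribution function with support $[\underline{w},\overline{w}]$, $\underline{w}<\overline{w}$, and mean $\mu_w$, and assume $\underline{w}<(1-\beta)z+\beta\mu_w$ and $z+c<\overline{w}$. Put $\Upsilon(x)=\int_{\underline{w}}^{x}x\,dF(w)+\int_{x}^{\overline{w}}w\,dF(w)$. Let $w_R(0)$ be the unique solution in $[\underline{w},\overline{w}]$ of $x=z(1-\beta)+\beta\Upsilon(x)$ and $w_R(n)=(z+c)(1-\beta)+\beta\Upsilon(w_R(n-1))$ for $n\ge1$. Let $w_R^\delta(0)=w_R^{\delta,\Delta}(0)$ be the unique solution in $[\underline{w},\overline{w}]$ of $x=z(1-\beta)+\beta\delta\Upsilon(w_R(\Delta))+\beta(1-\delta)\Upsilon(x)$, and for $n=1,\dots,N$ let $w_R^{\delta}(n)=w_R^{\delta,\Delta}(n)=(z+c)(1-\beta)+\beta\delta\Upsilon(w_R(n-1+\Delta))+\beta(1-\delta)\Upsilon(w_R^\delta(n-1))$. Then for each $n\in\{0,\dots,N\}$: (i) for fixed $\Delta$, $w_R^{\delta,\Delta}(n)$ is strictly increasing in $\delta$; (ii) for fixed $\delta$, $w_R^{\delta,\Delta}(n)$ is strictly increasing in $\Delta$ over the positive integers.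
   Context: Interpretation: $w_R(n)$ are the reservation wages of a risk-neutral job searcher (discount factor $\beta$, one i.i.d. offer per period from $F$, jobs kept forever, flow income $z+c$ while unemployed with $n\ge1$ remaining periods of unemployment benefits and $z$ when $n=0$) with no possibility of benefit extension; $w_R^{\delta}(n)$ are the reservation wages when, before any extension has occurred, benefits are extended (once) by $\Delta$ periods with probability $\delta$ between offers. $\delta$ and $\Delta$ represent the worker's beliefs about the probability and the length of an extension; the claim says the worker is more selective when believing an extension more likely or longer. *)

theory Defs
  imports "HOL-Probability.Probability"
begin

definition Upsilon :: "real measure \<Rightarrow> real \<Rightarrow> real \<Rightarrow> real \<Rightarrow> real" where
  "Upsilon M wl wh x = (LINT w:{wl..x}|M. x) + (LINT w:{x..wh}|M. w)"

fun wR :: "real measure \<Rightarrow> real \<Rightarrow> real \<Rightarrow> real \<Rightarrow> real \<Rightarrow> real \<Rightarrow> nat \<Rightarrow> real" where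
  "wR M wl wh \<beta> z c 0 =
     (THE x. x \<in> {wl..wh} \<and> x = z * (1 - \<beta>) + \<beta> * Upsilon M wl wh x)"
| "wR M wl wh \<beta> z c (Suc n) =
     (z + c) * (1 - \<beta>) + \<beta> * Upsilon M wl wh (wR M wl wh \<beta> z c n)"

fun wRd :: "real measure \<Rightarrow> real \<Rightarrow> real \<Rightarrow> real \<Rightarrow> real \<Rightarrow> real \<Rightarrow> real \<Rightarrow> nat \<Rightarrow> nat \<Rightarrow> real" where
  "wRd M wl wh \<beta> z c \<delta> \<Delta> 0 =
     (THE x. x \<in> {wl..wh} \<and>
        x = z * (1 - \<beta>) + \<beta> * \<delta> * Upsilon M wl wh (wR M wl wh \<beta> z c \<Delta>)
            + \<beta> * (1 - \<delta>) * Upsilon M wl wh x)"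
| "wRd M wl wh \<beta> z c \<delta> \<Delta> (Suc n) =
     (z + c) * (1 - \<beta>) + \<beta> * \<delta> * Upsilon M wl wh (wR M wl wh \<beta> z c (n + \<Delta>))
       + \<beta> * (1 - \<delta>) * Upsilon M wl wh (wRd M wl wh \<beta> z c \<delta> \<Delta> n)"

end

theory Submission
  imports Defs
begin


lemma cdf_loc_const:
  assumes dist: "real_distribution M" and a: "measure M {a - e<..<a + e} = 0" and e: "e > 0"
    and x: "x \<in> {a - e<..<a + e}"
  shows "cdf M x = cdf M a"
proof -
  interpret real_distribution M by fact
  show ?thesis
  proof (cases "x \<le> a")
    case True
    then have "cdf M a - cdf M x \<le> measure M {a - e<..<a + e}"
    proof (cases "x = a")
      case False
      then have "x < a" using True by simp
      then have eq: "cdf M a - cdf M x = measure M {x<..a}" by (rule cdf_diff_eq)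
      have sub: "{x<..a} \<subseteq> {a - e<..<a + e}" using x e by auto
      have "measure M {x<..a} \<le> measure M {a - e<..<a + e}"
        by (rule finite_measure_mono[OF sub]) simp
      then show ?thesis using eq by linarith
    qed (simp add: a)
    then show ?thesis using a cdf_nondecreasing[OF True] by linarith
  next
    case False
    then have "a < x" by simp
    then have "cdf M x - cdf M a = measure M {a<..x}" by (rule cdf_diff_eq)
    have sub: "{a<..x} \<subseteq> {a - e<..<a + e}" using x e by auto
    have "measure M {a<..x} \<le> measure M {a - e<..<a + e}"
      by (rule finite_measure_mono[OF sub]) simp
    then show ?thesis using a False cdf_nondecreasing[of a x] \<open>cdf M x - cdf M a = _\<close> by linarith
  qed
qed

lemma cdf_const_on:
  assumes dist: "real_distribution M" and S: "connected S" "open S"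
    and nsupp: "\<And>a. a \<in> S \<Longrightarrow> \<exists>e>0. measure M {a - e<..<a + e} = 0"
  shows "cdf M constant_on S"
proof (rule locally_constant_imp_constant[OF S(1)])
  fix a assume aS: "a \<in> S"
  obtain e where e: "e > 0" "measure M {a - e<..<a + e} = 0" using nsupp[OF aS] by blast
  show "\<exists>T. openin (top_of_set S) T \<and> a \<in> T \<and> (\<forall>x\<in>T. cdf M x = cdf M a)"
  proof -
    have "openin (top_of_set S) (S \<inter> {a - e<..<a + e})" by (rule openin_open_Int) simp
    moreover have "a \<in> S \<inter> {a - e<..<a + e}" using aS e by simp
    moreover have "\<forall>x\<in>S \<inter> {a - e<..<a + e}. cdf M x = cdf M a"
      using cdf_loc_const[OF dist e(2) e(1)] by blast
    ultimately show ?thesis by blast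
  qed
qed

lemma nsupp_out:
  assumes support: "\<forall>x. x \<in> {wl..wh} \<longleftrightarrow> (\<forall>e>0. measure M {x - e<..<x + e} > 0)"
    and "a \<notin> {wl..wh}"
  shows "\<exists>e>0. measure M {a - e<..<a + e} = 0"
  using assms by (metis measure_nonneg order_le_less)

lemma left_null:
  assumes dist: "real_distribution M"
    and support: "\<forall>x. x \<in> {wl..wh} \<longleftrightarrow> (\<forall>e>0. measure M {x - e<..<x + e} > 0)"
  shows "measure M {..<wl} = 0"
proof -
  interpret real_distribution M by fact
  have "cdf M constant_on {..<wl}"
    by (rule cdf_const_on[OF dist]) (auto intro!: nsupp_out[OF support])
  then obtain C where C: "\<And>x. x < wl \<Longrightarrow> cdf M x = C" unfolding constant_on_def by auto
  have ev: "eventually (\<lambda>x. cdf M x = C) at_bot"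
    unfolding eventually_at_bot_linorder using C by (intro exI[of _ "wl - 1"]) auto
  have "((\<lambda>x::real. C) \<longlongrightarrow> 0) at_bot"
    using Lim_transform_eventually[OF cdf_lim_at_bot ev] .
  then have C0: "C = 0" by (simp add: tendsto_const_iff)
  have ev2: "eventually (\<lambda>x. cdf M x = 0) (at_left wl)"
    using eventually_at_left_real[of "wl - 1" wl] by (rule eventually_mono) (auto simp: C C0)
  have "((\<lambda>x::real. 0) \<longlongrightarrow> measure M {..<wl}) (at_left wl)"
    using Lim_transform_eventually[OF cdf_at_left ev2] .
  then show ?thesis by (simp add: tendsto_const_iff)
qed

lemma right_null:
  assumes dist: "real_distribution M"
    and support: "\<forall>x. x \<in> {wl..wh} \<longleftrightarrow> (\<forall>e>0. measure M {x - e<..<x + e} > 0)"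
  shows "measure M {wh<..} = 0"
proof -
  interpret real_distribution M by fact
  have "cdf M constant_on {wh<..}"
    by (rule cdf_const_on[OF dist]) (auto intro!: nsupp_out[OF support])
  then obtain C where C: "\<And>x. x > wh \<Longrightarrow> cdf M x = C" unfolding constant_on_def by auto
  have ev: "eventually (\<lambda>x. cdf M x = C) at_top"
    unfolding eventually_at_top_linorder using C by (intro exI[of _ "wh + 1"]) auto
  have "((\<lambda>x::real. C) \<longlongrightarrow> 1) at_top"
    using Lim_transform_eventually[OF cdf_lim_at_top_prob ev] .
  then have C1: "C = 1" by (simp add: tendsto_const_iff)
  have ev2: "eventually (\<lambda>x. cdf M x = 1) (at_right wh)"
    using eventually_at_right_real[of wh "wh + 1"] by (rule eventually_mono) (auto simp: C C1)
  have "((\<lambda>x::real. 1) \<longlongrightarrow> cdf M wh) (at_right wh)"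
    using Lim_transform_eventually[OF cdf_is_right_cont[of wh, unfolded continuous_within] ev2] .
  then have "cdf M wh = 1" by (simp add: tendsto_const_iff)
  moreover have "measure M {wh<..} = 1 - measure M {..wh}"
    proof -
    have "{wh<..} = space M - {..wh}" by auto
    moreover have "prob (space M - {..wh}) = 1 - prob {..wh}" by (rule prob_compl) simp
    ultimately show ?thesis by metis
  qed
  ultimately show ?thesis using cdf_def2[of M wh] by linarith
qed

lemma AE_conc:
  assumes dist: "real_distribution M"
    and support: "\<forall>x. x \<in> {wl..wh} \<longleftrightarrow> (\<forall>e>0. measure M {x - e<..<x + e} > 0)"
  shows "AE w in M. wl \<le> w \<and> w \<le> wh"
proof -
  interpret real_distribution M by fact
  have "{..<wl} \<union> {wh<..} \<in> null_sets M"
  proof (intro null_setsI)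
    have "measure M ({..<wl} \<union> {wh<..}) \<le> measure M {..<wl} + measure M {wh<..}"
      by (rule measure_subadditive) auto
    then have "measure M ({..<wl} \<union> {wh<..}) = 0"
      using left_null[OF dist support] right_null[OF dist support] by (simp add: antisym)
    then show "emeasure M ({..<wl} \<union> {wh<..}) = 0" by (simp add: emeasure_eq_measure)
  qed (simp_all)
  show ?thesis
    using AE_not_in[OF \<open>_ \<in> null_sets M\<close>] by (rule eventually_mono) (simp add: not_le)
qed



lemma no_atom:
  assumes dist: "real_distribution M" and Fcont: "continuous_on UNIV (cdf M)"
  shows "AE w in M. w \<noteq> x"
proof -
  interpret real_distribution M by fact
  have "isCont (cdf M) x" using Fcont by (simp add: continuous_on_eq_continuous_at)
  then have m: "measure M {x} = 0" by (simp add: isCont_cdf)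
  have "{x} \<in> null_sets M"
    using m by (intro null_setsI) (simp_all add: emeasure_eq_measure)
  from AE_not_in[OF this] show ?thesis by simp
qed


lemma Ups_max:
  assumes dist: "real_distribution M" and Fcont: "continuous_on UNIV (cdf M)"
    and support: "\<forall>x. x \<in> {wl..wh} \<longleftrightarrow> (\<forall>e>0. measure M {x - e<..<x + e} > 0)"
    and x: "wl \<le> x" "x \<le> wh"
  shows "Upsilon M wl wh x = (\<integral>w. max x w \<partial>M)"
proof -
  interpret real_distribution M by fact
  define g1 where "g1 w = indicator {wl..x} w * x" for w :: real
  define g2 where "g2 w = indicator {x..wh} w * w" for w :: real
  have ae: "AE w in M. max x w = g1 w + g2 w"
    using AE_conc[OF dist support] no_atom[OF dist Fcont, of x]
    by eventually_elim (simp add: g1_def g2_def indicator_def max_def)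
  have m1: "g1 \<in> borel_measurable M" unfolding g1_def by measurable
  have m2: "g2 \<in> borel_measurable M" unfolding g2_def by measurable
  have i1: "integrable M g1"
    by (rule integrable_const_bound[where B="\<bar>x\<bar>", OF _ m1]) (intro AE_I2, simp add: g1_def indicator_def)
  have i2: "integrable M g2"
    by (rule integrable_const_bound[where B="\<bar>x\<bar> + \<bar>wh\<bar>", OF _ m2]) (intro AE_I2, auto simp: g2_def indicator_def)
  have "(\<integral>w. max x w \<partial>M) = (\<integral>w. g1 w + g2 w \<partial>M)"
  proof (rule integral_cong_AE[OF _ _ ae])
    show "(\<lambda>w. max x w) \<in> borel_measurable M" by measurable
    show "(\<lambda>w. g1 w + g2 w) \<in> borel_measurable M" using m1 m2 by measurable
  qed
  also have "\<dots> = integral\<^sup>L M g1 + integral\<^sup>L M g2"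
    by (rule Bochner_Integration.integral_add[OF i1 i2])
  also have "\<dots> = Upsilon M wl wh x"
    unfolding Upsilon_def set_lebesgue_integral_def real_scaleR_def g1_def[abs_def] g2_def[abs_def]
    by (rule refl)
  finally show ?thesis ..
qed



lemma int_max:
  assumes dist: "real_distribution M"
    and support: "\<forall>x. x \<in> {wl..wh} \<longleftrightarrow> (\<forall>e>0. measure M {x - e<..<x + e} > 0)"
  shows "integrable M (\<lambda>w. max x w)"
proof -
  interpret real_distribution M by fact
  have "AE w in M. norm (max x w) \<le> \<bar>x\<bar> + \<bar>wl\<bar> + \<bar>wh\<bar>"
    using AE_conc[OF dist support] by eventually_elim (simp add: max_def, arith)
  moreover have "(\<lambda>w. max x w) \<in> borel_measurable M" by measurable
  ultimately show ?thesis by (rule integrable_const_bound)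
qed

lemma Emax_mono:
  assumes dist: "real_distribution M"
    and support: "\<forall>x. x \<in> {wl..wh} \<longleftrightarrow> (\<forall>e>0. measure M {x - e<..<x + e} > 0)"
    and xy: "x \<le> y"
  shows "(\<integral>w. max x w \<partial>M) \<le> (\<integral>w. max y w \<partial>M)"
  by (rule integral_mono[OF int_max[OF dist support] int_max[OF dist support]]) (use xy in simp)

lemma Emax_lip:
  assumes dist: "real_distribution M"
    and support: "\<forall>x. x \<in> {wl..wh} \<longleftrightarrow> (\<forall>e>0. measure M {x - e<..<x + e} > 0)"
    and xy: "x \<le> y"
  shows "(\<integral>w. max y w \<partial>M) \<le> (\<integral>w. max x w \<partial>M) + (y - x)"
proof -
  interpret real_distribution M by fact
  have "(\<integral>w. max y w \<partial>M) \<le> (\<integral>w. max x w + (y - x) \<partial>M)"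
    by (rule integral_mono[OF int_max[OF dist support]])
       (use int_max[OF dist support] in simp, use xy in simp)
  also have "\<dots> = (\<integral>w. max x w \<partial>M) + (y - x)"
    using int_max[OF dist support, of x] prob_space by simp
  finally show ?thesis .
qed

lemma Emax_strict:
  assumes dist: "real_distribution M"
    and support: "\<forall>x. x \<in> {wl..wh} \<longleftrightarrow> (\<forall>e>0. measure M {x - e<..<x + e} > 0)"
    and x: "wl \<le> x" and xy: "x < y" and y: "y \<le> wh"
  shows "(\<integral>w. max x w \<partial>M) < (\<integral>w. max y w \<partial>M)"
proof -
  interpret real_distribution M by fact
  define m where "m = (x + y) / 2"
  have m: "x < m" "m < y" using xy by (simp_all add: m_def)
  define p where "p = (wl + m) / 2"
  define e where "e = (m - wl) / 2"
  have e: "e > 0" using m x by (simp add: e_def)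
  have p: "p \<in> {wl..wh}" using m x y by (simp add: p_def)
  have pos: "measure M {p - e<..<p + e} > 0" using support p e by blast
  have pe: "p + e = m" by (simp add: p_def e_def field_simps)
  have sub: "{p - e<..<p + e} \<subseteq> {..m}" using pe by auto
  have "measure M {p - e<..<p + e} \<le> measure M {..m}"
    by (rule finite_measure_mono[OF sub]) simp
  with pos have pm: "measure M {..m} > 0" by linarith
  have ind: "integrable M (\<lambda>w. indicator {..m} w * (y - m))"
    by (intro integrable_mult_left integrable_real_indicator) (simp_all add: less_top[symmetric])
  have "(\<integral>w. indicator {..m} w * (y - m) \<partial>M) \<le> (\<integral>w. max y w - max x w \<partial>M)"
  proof (rule integral_mono[OF ind])
    show "integrable M (\<lambda>w. max y w - max x w)"
      using int_max[OF dist support] by simp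
    fix w :: real
    show "indicator {..m} w * (y - m) \<le> max y w - max x w"
      using m by (cases "w \<le> m") (simp_all add: indicator_def max_def)
  qed
  also have "\<dots> = (\<integral>w. max y w \<partial>M) - (\<integral>w. max x w \<partial>M)"
    using int_max[OF dist support] by simp
  finally have "measure M {..m} * (y - m) \<le> (\<integral>w. max y w \<partial>M) - (\<integral>w. max x w \<partial>M)"
    by simp
  moreover have "measure M {..m} * (y - m) > 0" using pm m by simp
  ultimately show ?thesis by linarith
qed

lemma Emax_wl:
  assumes dist: "real_distribution M"
    and support: "\<forall>x. x \<in> {wl..wh} \<longleftrightarrow> (\<forall>e>0. measure M {x - e<..<x + e} > 0)"
  shows "(\<integral>w. max wl w \<partial>M) = (\<integral>w. w \<partial>M)"
proof -
  interpret real_distribution M by fact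
  show ?thesis
  proof (rule integral_cong_AE)
    show "(\<lambda>w. max wl w) \<in> borel_measurable M" by measurable
    show "(\<lambda>w. w) \<in> borel_measurable M" by measurable
    show "AE w in M. max wl w = w"
      using AE_conc[OF dist support] by eventually_elim simp
  qed
qed

lemma Emax_wh:
  assumes dist: "real_distribution M"
    and support: "\<forall>x. x \<in> {wl..wh} \<longleftrightarrow> (\<forall>e>0. measure M {x - e<..<x + e} > 0)"
  shows "(\<integral>w. max wh w \<partial>M) = wh"
proof -
  interpret real_distribution M by fact
  have "(\<integral>w. max wh w \<partial>M) = (\<integral>w. wh \<partial>M)"
  proof (rule integral_cong_AE)
    show "(\<lambda>w. max wh w) \<in> borel_measurable M" by measurable
    show "(\<lambda>w. wh) \<in> borel_measurable M" by measurable
    show "AE w in M. max wh w = wh"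
      using AE_conc[OF dist support] by eventually_elim simp
  qed
  then show ?thesis using prob_space by simp
qed



lemma aux_le: "0 \<le> (g::real) \<Longrightarrow> g \<le> 1 \<Longrightarrow> 0 \<le> d \<Longrightarrow> g * d \<le> d"
  by (simp add: mult_left_le_one_le)

context
  fixes M :: "real measure" and wl wh \<beta> z c :: real
  assumes wlwh: "wl < wh" and beta: "0 < \<beta>" "\<beta> < 1"
    and zpos: "0 < z" and cpos: "0 < c" and high: "z + c < wh"
    and Umono: "\<And>x y. wl \<le> x \<Longrightarrow> x \<le> y \<Longrightarrow> y \<le> wh \<Longrightarrow> Upsilon M wl wh x \<le> Upsilon M wl wh y"
    and Ulip: "\<And>x y. wl \<le> x \<Longrightarrow> x \<le> y \<Longrightarrow> y \<le> wh \<Longrightarrow> Upsilon M wl wh y \<le> Upsilon M wl wh x + (y - x)"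
    and Ustrict: "\<And>x y. wl \<le> x \<Longrightarrow> x < y \<Longrightarrow> y \<le> wh \<Longrightarrow> Upsilon M wl wh x < Upsilon M wl wh y"
    and Uwh: "Upsilon M wl wh wh = wh"
    and low: "wl < (1 - \<beta>) * z + \<beta> * Upsilon M wl wh wl"
begin

abbreviation U where "U \<equiv> Upsilon M wl wh"
abbreviation W where "W \<equiv> wR M wl wh \<beta> z c"
abbreviation Wd where "Wd \<equiv> wRd M wl wh \<beta> z c"

lemma U_cont: "continuous_on {wl..wh} U"
proof (rule lipschitz_on_continuous_on)
  show "1-lipschitz_on {wl..wh} U"
  proof (rule lipschitz_onI)
    fix x y assume x: "x \<in> {wl..wh}" and y: "y \<in> {wl..wh}"
    show "dist (U x) (U y) \<le> 1 * dist x y"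
    proof (cases "x \<le> y")
      case True
      then show ?thesis using Umono[of x y] Ulip[of x y] x y by (simp add: dist_real_def abs_le_iff)
    next
      case False
      then show ?thesis using Umono[of y x] Ulip[of y x] x y by (simp add: dist_real_def abs_le_iff)
    qed
  qed simp
qed

lemma fp_ex1:
  assumes g: "0 \<le> \<gamma>" "\<gamma> < 1" and l: "wl \<le> K + \<gamma> * U wl" and h: "K + \<gamma> * U wh \<le> wh"
  shows "\<exists>!x. x \<in> {wl..wh} \<and> x = K + \<gamma> * U x"
proof -
  have cont: "continuous_on {wl..wh} (\<lambda>x. x - \<gamma> * U x)"
    by (intro continuous_intros U_cont)
  have "\<exists>x\<ge>wl. x \<le> wh \<and> x - \<gamma> * U x = K"
    by (rule IVT'[OF _ _ _ cont]) (use l h wlwh in auto)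
  then obtain x where x: "x \<in> {wl..wh}" "x = K + \<gamma> * U x" by auto
  have main: False if a: "a \<in> {wl..wh}" "a = K + \<gamma> * U a" and b: "b \<in> {wl..wh}" "b = K + \<gamma> * U b"
    and ab: "a < b" for a b
  proof -
    have "U b \<le> U a + (b - a)" using Ulip[of a b] a b ab by simp
    then have "\<gamma> * U b \<le> \<gamma> * (U a + (b - a))" using g by (simp add: mult_left_mono)
    moreover have "\<gamma> * (b - a) < b - a" using g ab by simp
    ultimately show False using a b by (simp add: algebra_simps)
  qed
  show ?thesis
  proof (rule ex1I[of _ x])
    show "x \<in> {wl..wh} \<and> x = K + \<gamma> * U x" using x by simp
    fix y assume y: "y \<in> {wl..wh} \<and> y = K + \<gamma> * U y"
    show "y = x"
    proof (rule ccontr)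
      assume "y \<noteq> x"
      then have "y < x \<or> x < y" by auto
      then show False
      proof
        assume "y < x" then show False using main[of y x] x y by blast
      next
        assume "x < y" then show False using main[of x y] x y by blast
      qed
    qed
  qed
qed

lemma W0: "W 0 \<in> {wl..wh} \<and> W 0 = z * (1 - \<beta>) + \<beta> * U (W 0)"
proof -
  have "\<exists>!x. x \<in> {wl..wh} \<and> x = z * (1 - \<beta>) + \<beta> * U x"
  proof (rule fp_ex1)
    show "0 \<le> \<beta>" "\<beta> < 1" using beta by auto
    show "wl \<le> z * (1 - \<beta>) + \<beta> * U wl" using low by (simp add: mult.commute)
    have "z * (1 - \<beta>) + \<beta> * wh \<le> wh"
    proof -
      have "(1 - \<beta>) * z \<le> (1 - \<beta>) * wh" using beta zpos cpos high by (intro mult_left_mono) auto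
      then show ?thesis by (simp add: algebra_simps)
    qed
    then show "z * (1 - \<beta>) + \<beta> * U wh \<le> wh" by (simp add: Uwh)
  qed
  from theI'[OF this] show ?thesis by simp
qed

lemma W0_gt: "wl < W 0"
proof -
  have "W 0 \<noteq> wl"
  proof
    assume "W 0 = wl"
    then show False using W0 low by (simp add: mult.commute)
  qed
  then show ?thesis using W0 by auto
qed

lemma W_step: "wl \<le> W n \<and> W n < W (Suc n) \<and> W (Suc n) \<le> wh"
proof (induction n)
  case 0
  have r: "wl \<le> W 0" "W 0 \<le> wh" using W0 by auto
  have "U (W 0) \<le> wh" using Umono[of "W 0" wh] r Uwh by simp
  then have "\<beta> * U (W 0) \<le> \<beta> * wh" using beta by (simp add: mult_left_mono)
  moreover have "(1 - \<beta>) * (z + c) \<le> (1 - \<beta>) * wh" using beta high by (intro mult_left_mono) auto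
  moreover have "0 < (1 - \<beta>) * c" using beta cpos by simp
  ultimately show ?case using r W0 by (simp add: algebra_simps)
next
  case (Suc n)
  have r: "wl \<le> W n" "W n < W (Suc n)" "W (Suc n) \<le> wh" using Suc by auto
  have "U (W n) < U (W (Suc n))" using Ustrict r by simp
  then have s: "\<beta> * U (W n) < \<beta> * U (W (Suc n))" using beta by simp
  have "U (W (Suc n)) \<le> wh" using Umono[of "W (Suc n)" wh] r Uwh by simp
  then have "\<beta> * U (W (Suc n)) \<le> \<beta> * wh" using beta by (simp add: mult_left_mono)
  moreover have "(1 - \<beta>) * (z + c) \<le> (1 - \<beta>) * wh" using beta high by (intro mult_left_mono) auto
  ultimately show ?case using r s by (simp add: algebra_simps)
qed

lemma W_mono: "m < n \<Longrightarrow> W m < W n"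
  by (rule lift_Suc_mono_less[of W]) (use W_step in auto)

lemma W_range: "wl < W n \<and> W n \<le> wh"
proof (cases n)
  case 0 then show ?thesis using W0 W0_gt by auto
next
  case (Suc m) then show ?thesis using W_step[of m] W_mono[of 0 n] W0_gt by auto
qed


lemma U_ge_wl: "wl \<le> x \<Longrightarrow> x \<le> wh \<Longrightarrow> U wl \<le> U x"
  using Umono[of wl x] by simp

lemma U_le_wh: "wl \<le> x \<Longrightarrow> x \<le> wh \<Longrightarrow> U x \<le> wh"
  using Umono[of x wh] Uwh by simp

lemma Wd0:
  assumes d: "0 < \<delta>" "\<delta> < 1"
  shows "Wd \<delta> D 0 \<in> {wl..wh} \<and>
    Wd \<delta> D 0 = z * (1 - \<beta>) + \<beta> * \<delta> * U (W D) + \<beta> * (1 - \<delta>) * U (Wd \<delta> D 0)"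
proof -
  let ?A = "U (W D)"
  have rA: "wl \<le> W D" "W D \<le> wh" using W_range[of D] by auto
  have A1: "U wl \<le> ?A" using U_ge_wl rA by simp
  have A2: "?A \<le> wh" using U_le_wh rA by simp
  have bd: "0 < \<beta> * \<delta>" using beta d by simp
  have "\<exists>!x. x \<in> {wl..wh} \<and> x = (z * (1 - \<beta>) + \<beta> * \<delta> * ?A) + (\<beta> * (1 - \<delta>)) * U x"
  proof (rule fp_ex1)
    show "0 \<le> \<beta> * (1 - \<delta>)" using beta d by simp
    show "\<beta> * (1 - \<delta>) < 1" using beta bd by (simp add: algebra_simps)
    have "\<beta> * \<delta> * U wl \<le> \<beta> * \<delta> * ?A" using bd A1 by (simp add: mult_left_mono)
    then show "wl \<le> z * (1 - \<beta>) + \<beta> * \<delta> * ?A + \<beta> * (1 - \<delta>) * U wl"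
      using low by (simp add: algebra_simps)
    have "\<beta> * \<delta> * ?A \<le> \<beta> * \<delta> * wh" using bd A2 by (simp add: mult_left_mono)
    moreover have "(1 - \<beta>) * z \<le> (1 - \<beta>) * wh" using beta zpos cpos high by (intro mult_left_mono) auto
    ultimately show "z * (1 - \<beta>) + \<beta> * \<delta> * ?A + \<beta> * (1 - \<delta>) * U wh \<le> wh"
      by (simp add: Uwh algebra_simps)
  qed
  from theI'[OF this] show ?thesis by simp
qed

lemma Wd0_lt:
  assumes d: "0 < \<delta>" "\<delta> < 1" and D: "0 < D"
  shows "Wd \<delta> D 0 < W D"
proof (rule ccontr)
  let ?x = "Wd \<delta> D 0" and ?r = "W 0"
  assume "\<not> ?x < W D"
  then have ge: "W D \<le> ?x" by simp
  have rx: "wl \<le> ?x" "?x \<le> wh" and ex: "?x = z * (1 - \<beta>) + \<beta> * \<delta> * U (W D) + \<beta> * (1 - \<delta>) * U ?x"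
    using Wd0[OF d, of D] by auto
  have rD: "wl \<le> W D" "W D \<le> wh" using W_range[of D] by auto
  have r0: "wl \<le> ?r" "?r \<le> wh" and er: "?r = z * (1 - \<beta>) + \<beta> * U ?r" using W0 by auto
  have lt: "?r < W D" using W_mono[OF D] .
  have "U (W D) \<le> U ?x" using Umono ge rD rx by simp
  then have "\<beta> * \<delta> * U (W D) \<le> \<beta> * \<delta> * U ?x" using beta d by (simp add: mult_left_mono)
  then have x1: "?x \<le> z * (1 - \<beta>) + \<beta> * U ?x" using ex by (simp add: algebra_simps)
  have rlx: "?r < ?x" using lt ge by simp
  have "U ?x \<le> U ?r + (?x - ?r)" using Ulip[of ?r ?x] r0 rx rlx by simp
  then have "\<beta> * U ?x \<le> \<beta> * (U ?r + (?x - ?r))" using beta by (simp add: mult_left_mono)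
  then have "?x - ?r \<le> \<beta> * (?x - ?r)" using x1 er by (simp add: algebra_simps)
  moreover have "\<beta> * (?x - ?r) < ?x - ?r" using beta rlx by simp
  ultimately show False by simp
qed

lemma Wd_bound:
  assumes d: "0 < \<delta>" "\<delta> < 1" and D: "0 < D"
  shows "wl \<le> Wd \<delta> D n \<and> Wd \<delta> D n < W (n + D)"
proof (induction n)
  case 0
  then show ?case using Wd0[OF d, of D] Wd0_lt[OF d D] by auto
next
  case (Suc n)
  let ?y = "Wd \<delta> D n" and ?a = "W (n + D)"
  have ry: "wl \<le> ?y" "?y < ?a" using Suc by auto
  have ra: "wl \<le> ?a" "?a \<le> wh" using W_range[of "n + D"] by auto
  have "U ?y < U ?a" using Ustrict ry ra by simp
  then have s: "\<beta> * (1 - \<delta>) * U ?y < \<beta> * (1 - \<delta>) * U ?a" using beta d by simp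
  have eW: "W (Suc n + D) = (z + c) * (1 - \<beta>) + \<beta> * U ?a" by simp
  have eWd: "Wd \<delta> D (Suc n) = (z + c) * (1 - \<beta>) + \<beta> * \<delta> * U ?a + \<beta> * (1 - \<delta>) * U ?y" by simp
  have up: "Wd \<delta> D (Suc n) < W (Suc n + D)" using eW eWd s by (simp add: algebra_simps)
  have "U wl \<le> U ?y" using U_ge_wl ry ra by simp
  then have l1: "\<beta> * (1 - \<delta>) * U wl \<le> \<beta> * (1 - \<delta>) * U ?y" using beta d by (simp add: mult_left_mono)
  have "U wl \<le> U ?a" using U_ge_wl ra by simp
  then have l2: "\<beta> * \<delta> * U wl \<le> \<beta> * \<delta> * U ?a" using beta d by (simp add: mult_left_mono)
  have l3: "0 < (1 - \<beta>) * c" using beta cpos by simp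
  have "wl \<le> Wd \<delta> D (Suc n)" using eWd l1 l2 l3 low by (simp add: algebra_simps)
  then show ?case using up by simp
qed

lemma Wd_range:
  assumes d: "0 < \<delta>" "\<delta> < 1" and D: "0 < D"
  shows "wl \<le> Wd \<delta> D n \<and> Wd \<delta> D n \<le> wh"
  using Wd_bound[OF d D, of n] W_range[of "n + D"] by auto

lemma Wd_delta_mono:
  assumes d1: "0 < \<delta>1" and d12: "\<delta>1 < \<delta>2" and d2: "\<delta>2 < 1" and D: "0 < D"
  shows "Wd \<delta>1 D n < Wd \<delta>2 D n"
proof (induction n)
  case 0
  let ?x1 = "Wd \<delta>1 D 0" and ?x2 = "Wd \<delta>2 D 0" and ?A = "U (W D)"
  have dd1: "0 < \<delta>1" "\<delta>1 < 1" and dd2: "0 < \<delta>2" "\<delta>2 < 1" using assms by auto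
  have e1: "?x1 = z * (1 - \<beta>) + \<beta> * \<delta>1 * ?A + \<beta> * (1 - \<delta>1) * U ?x1" using Wd0[OF dd1] by blast
  have e2: "?x2 = z * (1 - \<beta>) + \<beta> * \<delta>2 * ?A + \<beta> * (1 - \<delta>2) * U ?x2" using Wd0[OF dd2] by blast
  have r1: "wl \<le> ?x1" "?x1 \<le> wh" using Wd0[OF dd1, of D] by auto
  have r2: "wl \<le> ?x2" "?x2 \<le> wh" using Wd0[OF dd2, of D] by auto
  have lt1: "?x1 < W D" using Wd0_lt[OF dd1 D] .
  have rD: "W D \<le> wh" using W_range by auto
  show ?case
  proof (rule ccontr)
    assume "\<not> ?x1 < ?x2"
    then have le: "?x2 \<le> ?x1" by simp
    have id: "?x1 - ?x2 = - (\<beta> * (\<delta>2 - \<delta>1) * (?A - U ?x1)) + \<beta> * (1 - \<delta>2) * (U ?x1 - U ?x2)"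
    proof -
      have "?x1 - ?x2 = (z * (1 - \<beta>) + \<beta> * \<delta>1 * ?A + \<beta> * (1 - \<delta>1) * U ?x1)
          - (z * (1 - \<beta>) + \<beta> * \<delta>2 * ?A + \<beta> * (1 - \<delta>2) * U ?x2)"
        using e1 e2 by linarith
      also have "\<dots> = - (\<beta> * (\<delta>2 - \<delta>1) * (?A - U ?x1)) + \<beta> * (1 - \<delta>2) * (U ?x1 - U ?x2)"
        by (simp add: algebra_simps)
      finally show ?thesis .
    qed
    have "U ?x1 < ?A" using Ustrict r1 lt1 rD by simp
    then have t1: "0 < \<beta> * (\<delta>2 - \<delta>1) * (?A - U ?x1)" using beta d12 by simp
    have "U ?x1 - U ?x2 \<le> ?x1 - ?x2" using Ulip[of ?x2 ?x1] r1 r2 le by simp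
    then have t2: "\<beta> * (1 - \<delta>2) * (U ?x1 - U ?x2) \<le> \<beta> * (1 - \<delta>2) * (?x1 - ?x2)"
      using beta d2 by (simp add: mult_left_mono)
    have "\<beta> * (1 - \<delta>2) \<le> \<beta> * 1" using beta d2 dd2 by (intro mult_left_mono) auto
    then have "\<beta> * (1 - \<delta>2) \<le> 1" using beta mult_1_right[of \<beta>] by linarith
    moreover have "0 \<le> \<beta> * (1 - \<delta>2)" using beta d2 by simp
    moreover have "0 \<le> ?x1 - ?x2" using le by linarith
    ultimately have t3: "\<beta> * (1 - \<delta>2) * (?x1 - ?x2) \<le> ?x1 - ?x2" by (intro aux_le)
    show False using id t1 t2 t3 by linarith
  qed
next
  case (Suc n)
  let ?y1 = "Wd \<delta>1 D n" and ?y2 = "Wd \<delta>2 D n" and ?a = "W (n + D)"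
  have dd1: "0 < \<delta>1" "\<delta>1 < 1" and dd2: "0 < \<delta>2" "\<delta>2 < 1" using assms by auto
  have r1: "wl \<le> ?y1" "?y1 < ?a" using Wd_bound[OF dd1 D, of n] by blast+
  have r2: "?y2 \<le> wh" using Wd_range[OF dd2 D, of n] by blast
  have ra: "?a \<le> wh" using W_range by auto
  have "U ?y1 < U ?a" using Ustrict r1 ra by simp
  then have t1: "0 < \<beta> * (\<delta>2 - \<delta>1) * (U ?a - U ?y1)" using beta d12 by simp
  have "U ?y1 \<le> U ?y2" using Umono r1 r2 Suc.IH by simp
  then have t2: "0 \<le> \<beta> * (1 - \<delta>2) * (U ?y2 - U ?y1)" using beta d2 by simp
  have "Wd \<delta>2 D (Suc n) - Wd \<delta>1 D (Suc n) = \<beta> * (\<delta>2 - \<delta>1) * (U ?a - U ?y1) + \<beta> * (1 - \<delta>2) * (U ?y2 - U ?y1)"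
    by (simp add: algebra_simps)
  then show ?case using t1 t2 by linarith
qed

lemma Wd_Delta_mono:
  assumes d: "0 < \<delta>" "\<delta> < 1" and D1: "0 < D1" and D12: "D1 < D2"
  shows "Wd \<delta> D1 n < Wd \<delta> D2 n"
proof (induction n)
  case 0
  let ?x1 = "Wd \<delta> D1 0" and ?x2 = "Wd \<delta> D2 0" and ?A1 = "U (W D1)" and ?A2 = "U (W D2)"
  have D2: "0 < D2" using D1 D12 by simp
  have e1: "?x1 = z * (1 - \<beta>) + \<beta> * \<delta> * ?A1 + \<beta> * (1 - \<delta>) * U ?x1" using Wd0[OF d] by blast
  have e2: "?x2 = z * (1 - \<beta>) + \<beta> * \<delta> * ?A2 + \<beta> * (1 - \<delta>) * U ?x2" using Wd0[OF d] by blast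
  have r1: "wl \<le> ?x1" "?x1 \<le> wh" using Wd0[OF d, of D1] by auto
  have r2: "wl \<le> ?x2" "?x2 \<le> wh" using Wd0[OF d, of D2] by auto
  have rD1: "wl \<le> W D1" using W_range[of D1] by auto
  have rD2: "W D2 \<le> wh" using W_range[of D2] by auto
  have "?A1 < ?A2" using Ustrict rD1 rD2 W_mono[OF D12] by simp
  then have t1: "0 < \<beta> * \<delta> * (?A2 - ?A1)" using beta d by simp
  show ?case
  proof (rule ccontr)
    assume "\<not> ?x1 < ?x2"
    then have le: "?x2 \<le> ?x1" by simp
    have id: "?x1 - ?x2 = - (\<beta> * \<delta> * (?A2 - ?A1)) + \<beta> * (1 - \<delta>) * (U ?x1 - U ?x2)"
    proof -
      have "?x1 - ?x2 = (z * (1 - \<beta>) + \<beta> * \<delta> * ?A1 + \<beta> * (1 - \<delta>) * U ?x1)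
          - (z * (1 - \<beta>) + \<beta> * \<delta> * ?A2 + \<beta> * (1 - \<delta>) * U ?x2)"
        using e1 e2 by linarith
      also have "\<dots> = - (\<beta> * \<delta> * (?A2 - ?A1)) + \<beta> * (1 - \<delta>) * (U ?x1 - U ?x2)"
        by (simp add: algebra_simps)
      finally show ?thesis .
    qed
    have "U ?x1 - U ?x2 \<le> ?x1 - ?x2" using Ulip[of ?x2 ?x1] r1 r2 le by simp
    then have t2: "\<beta> * (1 - \<delta>) * (U ?x1 - U ?x2) \<le> \<beta> * (1 - \<delta>) * (?x1 - ?x2)"
      using beta d by (simp add: mult_left_mono)
    have "\<beta> * (1 - \<delta>) \<le> \<beta> * 1" using beta d by (intro mult_left_mono) auto
    then have "\<beta> * (1 - \<delta>) \<le> 1" using beta mult_1_right[of \<beta>] by linarith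
    moreover have "0 \<le> \<beta> * (1 - \<delta>)" using beta d by simp
    moreover have "0 \<le> ?x1 - ?x2" using le by linarith
    ultimately have t3: "\<beta> * (1 - \<delta>) * (?x1 - ?x2) \<le> ?x1 - ?x2" by (intro aux_le)
    show False using id t1 t2 t3 by linarith
  qed
next
  case (Suc n)
  let ?y1 = "Wd \<delta> D1 n" and ?y2 = "Wd \<delta> D2 n"
  have D2: "0 < D2" using D1 D12 by simp
  have r1: "wl \<le> ?y1" using Wd_range[OF d D1, of n] by blast
  have r2: "?y2 \<le> wh" using Wd_range[OF d D2, of n] by blast
  have ra1: "wl \<le> W (n + D1)" using W_range[of "n + D1"] less_imp_le by blast
  have ra2: "W (n + D2) \<le> wh" using W_range[of "n + D2"] by blast
  have "U (W (n + D1)) < U (W (n + D2))" using Ustrict ra1 ra2 W_mono[of "n + D1" "n + D2"] D12 by simp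
  then have t1: "0 < \<beta> * \<delta> * (U (W (n + D2)) - U (W (n + D1)))" using beta d by simp
  have "U ?y1 \<le> U ?y2" using Umono r1 r2 Suc.IH by simp
  then have t2: "0 \<le> \<beta> * (1 - \<delta>) * (U ?y2 - U ?y1)" using beta d by simp
  have "Wd \<delta> D2 (Suc n) - Wd \<delta> D1 (Suc n) = \<beta> * \<delta> * (U (W (n + D2)) - U (W (n + D1))) + \<beta> * (1 - \<delta>) * (U ?y2 - U ?y1)"
    by (simp add: algebra_simps)
  then show ?case using t1 t2 by linarith
qed

end

theorem proposition3:
  fixes M :: "real measure" and wl wh \<beta> z c \<delta> :: real and N \<Delta> :: nat
  assumes dist: "real_distribution M"
    and Fcont: "continuous_on UNIV (cdf M)"
    and support: "\<forall>x. x \<in> {wl..wh} \<longleftrightarrow> (\<forall>e>0. measure M {x - e<..<x + e} > 0)"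
    and wlwh: "wl < wh"
    and beta: "0 < \<beta>" "\<beta> < 1"
    and zpos: "0 < z" and cpos: "0 < c"
    and delta: "0 < \<delta>" "\<delta> < 1"
    and Npos: "0 < N" and Dpos: "0 < \<Delta>"
    and low: "wl < (1 - \<beta>) * z + \<beta> * (LINT w|M. w)"
    and high: "z + c < wh"
  shows "\<forall>n \<le> N.
     (\<forall>\<delta>1 \<delta>2. 0 < \<delta>1 \<longrightarrow> \<delta>1 < \<delta>2 \<longrightarrow> \<delta>2 < 1 \<longrightarrow>
        wRd M wl wh \<beta> z c \<delta>1 \<Delta> n < wRd M wl wh \<beta> z c \<delta>2 \<Delta> n) \<and>
     (\<forall>\<Delta>1 \<Delta>2. 0 < \<Delta>1 \<longrightarrow> \<Delta>1 < \<Delta>2 \<longrightarrow>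
        wRd M wl wh \<beta> z c \<delta> \<Delta>1 n < wRd M wl wh \<beta> z c \<delta> \<Delta>2 n)"
  proof -
  let ?U = "Upsilon M wl wh"
  have Umono: "\<And>x y. wl \<le> x \<Longrightarrow> x \<le> y \<Longrightarrow> y \<le> wh \<Longrightarrow> ?U x \<le> ?U y"
  proof -
    fix x y assume "wl \<le> x" "x \<le> y" "y \<le> wh"
    then show "?U x \<le> ?U y"
      using Ups_max[OF dist Fcont support, of x] Ups_max[OF dist Fcont support, of y]
        Emax_mono[OF dist support, of x y] by simp
  qed
  have Ulip: "\<And>x y. wl \<le> x \<Longrightarrow> x \<le> y \<Longrightarrow> y \<le> wh \<Longrightarrow> ?U y \<le> ?U x + (y - x)"
  proof -
    fix x y assume "wl \<le> x" "x \<le> y" "y \<le> wh"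
    then show "?U y \<le> ?U x + (y - x)"
      using Ups_max[OF dist Fcont support, of x] Ups_max[OF dist Fcont support, of y]
        Emax_lip[OF dist support, of x y] by simp
  qed
  have Ustrict: "\<And>x y. wl \<le> x \<Longrightarrow> x < y \<Longrightarrow> y \<le> wh \<Longrightarrow> ?U x < ?U y"
  proof -
    fix x y assume "wl \<le> x" "x < y" "y \<le> wh"
    then show "?U x < ?U y"
      using Ups_max[OF dist Fcont support, of x] Ups_max[OF dist Fcont support, of y]
        Emax_strict[OF dist support, of x y] by simp
  qed
  have Uwh: "?U wh = wh"
    using Ups_max[OF dist Fcont support, of wh] Emax_wh[OF dist support] wlwh by simp
  have Uwl: "?U wl = (LINT w|M. w)"
    using Ups_max[OF dist Fcont support, of wl] Emax_wl[OF dist support] wlwh by simp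
  have low': "wl < (1 - \<beta>) * z + \<beta> * ?U wl" using low Uwl by simp
  have high': "z + c < wh" using high .
  show ?thesis
  proof (intro allI impI conjI)
    fix n :: nat and \<delta>1 \<delta>2 :: real
    assume "0 < \<delta>1" "\<delta>1 < \<delta>2" "\<delta>2 < 1"
    then show "wRd M wl wh \<beta> z c \<delta>1 \<Delta> n < wRd M wl wh \<beta> z c \<delta>2 \<Delta> n"
      using Wd_delta_mono[OF wlwh beta zpos cpos high' Umono Ulip Ustrict Uwh low'] Dpos by blast
  next
    fix n \<Delta>1 \<Delta>2 :: nat
    assume "0 < \<Delta>1" "\<Delta>1 < \<Delta>2"
    then show "wRd M wl wh \<beta> z c \<delta> \<Delta>1 n < wRd M wl wh \<beta> z c \<delta> \<Delta>2 n"
      using Wd_Delta_mono[OF wlwh beta zpos cpos high' Umono Ulip Ustrict Uwh low'] delta by blast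
  qed
qed

end
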